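(* $$\lim_{n\to\infty}\frac{|CK_n|}{|K_n|}=1.$$
   Context: $K_n=\{\sigma\in S_n: |\sigma_i-\sigma_{i+1}|>1 \text{ for all } 1\le i\le n-1\}$ (king permutations, in one-line notation), and $CK_n=\{\sigma\in K_n: |\sigma_1-\sigma_n|>1\}$ (cylindrical king permutations). *)

theory Defs
  imports "HOL-Analysis.Analysis" "HOL-Combinatorics.Permutations"
begin

definition king_perms :: "nat \<Rightarrow> (nat \<Rightarrow> nat) set" where
  "king_perms n = {\<sigma>. \<sigma> permutes {1..n} \<and>
     (\<forall>i. 1 \<le> i \<and> i \<le> n - 1 \<longrightarrow> \<bar>int (\<sigma> i) - int (\<sigma> (i + 1))\<bar> > 1)}"

definition cyl_king_perms :: "nat \<Rightarrow> (nat \<Rightarrow> nat) set" where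
  "cyl_king_perms n = {\<sigma> \<in> king_perms n. \<bar>int (\<sigma> 1) - int (\<sigma> n)\<bar> > 1}"

end

theory Submission
  imports Defs "HOL-Real_Asymp.Real_Asymp"
begin

definition cyc :: "nat \<Rightarrow> nat \<Rightarrow> nat \<Rightarrow> nat" where
  "cyc n j i = (if i < j \<or> n < i then i else if i = j then n else i - 1)"

definition cycinv :: "nat \<Rightarrow> nat \<Rightarrow> nat \<Rightarrow> nat" where
  "cycinv n j i = (if i < j \<or> n < i then i else if i = n then j else i + 1)"

lemma cyc_inv1: "j \<le> n \<Longrightarrow> cyc n j (cycinv n j i) = i"
  unfolding cyc_def cycinv_def by auto

lemma cyc_inv2: "j \<le> n \<Longrightarrow> cycinv n j (cyc n j i) = i"
  unfolding cyc_def cycinv_def by auto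

lemma cyc_permutes:
  assumes "1 \<le> j" "j \<le> n"
  shows "cyc n j permutes {1..n}"
  unfolding permutes_def
proof (intro conjI allI impI)
  fix x assume "x \<notin> {1..n}"
  then show "cyc n j x = x" using assms unfolding cyc_def by auto
next
  fix y
  show "\<exists>!x. cyc n j x = y"
    using cyc_inv1[OF assms(2)] cyc_inv2[OF assms(2)] by metis
qed

lemma king_finite: "finite (king_perms n)"
  by (rule finite_subset[OF _ finite_permutations[of "{1..n}"]])
     (auto simp: king_perms_def)

lemma card3:
  assumes "inj_on f A"
  shows "card {x\<in>A. \<bar>int (f x) - int v\<bar> \<le> 1} \<le> 3"
proof -
  have "f ` {x\<in>A. \<bar>int (f x) - int v\<bar> \<le> 1} \<subseteq> {v-1, v, v+1}" by auto
  moreover have "inj_on f {x\<in>A. \<bar>int (f x) - int v\<bar> \<le> 1}"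
    using assms by (rule inj_on_subset) auto
  ultimately have "card {x\<in>A. \<bar>int (f x) - int v\<bar> \<le> 1} \<le> card {v-1, v, v+1}"
    by (intro card_inj_on_le) auto
  also have "\<dots> \<le> 3" by (simp add: card_insert_if)
  finally show ?thesis .
qed

lemma king_insert:
  assumes K: "\<sigma> \<in> king_perms n" and j: "2 \<le> j" "j \<le> n - 1"
    and a: "\<bar>int (\<sigma> (j-1)) - int (\<sigma> n)\<bar> > 1" and b: "\<bar>int (\<sigma> j) - int (\<sigma> n)\<bar> > 1"
  shows "\<sigma> \<circ> cyc n j \<in> king_perms n"
proof -
  have p: "\<sigma> permutes {1..n}" and hk: "\<And>i. 1 \<le> i \<Longrightarrow> i \<le> n - 1 \<Longrightarrow> \<bar>int (\<sigma> i) - int (\<sigma> (i + 1))\<bar> > 1"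
    using K by (auto simp: king_perms_def)
  have "\<sigma> \<circ> cyc n j permutes {1..n}"
    by (rule permutes_compose[OF cyc_permutes p]) (use j in auto)
  moreover have "\<bar>int ((\<sigma> \<circ> cyc n j) i) - int ((\<sigma> \<circ> cyc n j) (i + 1))\<bar> > 1"
    if i: "1 \<le> i" "i \<le> n - 1" for i
  proof -
    consider "i + 1 < j" | "i + 1 = j" | "i = j" | "j < i" by linarith
    then show ?thesis
    proof cases
      case 1 then show ?thesis using hk[OF i] i by (simp add: cyc_def)
    next
      case 2
      then have "i = j - 1" by simp
      then show ?thesis using a i j 2 \<open>j \<le> n - 1\<close> by (auto simp add: cyc_def abs_minus_commute)
    next
      case 3
      have "cyc n j i = n" "cyc n j (i+1) = j" using 3 i j by (auto simp: cyc_def)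
      then show ?thesis using b by (simp add: abs_minus_commute)
    next
      case 4
      have "\<bar>int (\<sigma> (i-1)) - int (\<sigma> (i - 1 + 1))\<bar> > 1" using hk[of "i-1"] 4 i j by simp
      moreover have "cyc n j i = i - 1" "cyc n j (i+1) = i" using 4 i j by (auto simp: cyc_def)
      ultimately show ?thesis using 4 by simp
    qed
  qed
  ultimately show ?thesis by (auto simp: king_perms_def)
qed


lemma count_bound:
  assumes n: "2 \<le> n"
  shows "card {\<sigma>\<in>king_perms n. \<bar>int (\<sigma> 1) - int (\<sigma> n)\<bar> \<le> 1} * (n - 8) \<le> card (king_perms n) * 3"
proof -
  define K where "K = king_perms n"
  define B where "B = {\<sigma>\<in>K. \<bar>int (\<sigma> 1) - int (\<sigma> n)\<bar> \<le> 1}"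
  define G where "G = (\<lambda>\<sigma>. {j\<in>{2..n-1}. \<sigma> \<circ> cyc n j \<in> K})"
  define F where "F = (\<lambda>\<tau>::nat\<Rightarrow>nat. {j\<in>{2..n-1}. \<bar>int (\<tau> j) - int (\<tau> 1)\<bar> \<le> 1})"
  define D where "D = Sigma B G"
  have finK: "finite K" unfolding K_def by (rule king_finite)
  have finB: "finite B" using finK unfolding B_def by simp
  have Gb: "n - 8 \<le> card (G \<sigma>)" if s: "\<sigma> \<in> B" for \<sigma>
  proof -
    have sK: "\<sigma> \<in> king_perms n" using s unfolding B_def K_def by simp
    then have p: "\<sigma> permutes {1..n}" by (simp add: king_perms_def)
    then have injs: "inj \<sigma>" by (rule permutes_inj)
    define X1 where "X1 = {j\<in>{2..n-1}. \<bar>int (\<sigma> (j-1)) - int (\<sigma> n)\<bar> \<le> 1}"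
    define X2 where "X2 = {j\<in>{2..n-1}. \<bar>int (\<sigma> j) - int (\<sigma> n)\<bar> \<le> 1}"
    have "inj_on (\<lambda>j. \<sigma> (j-1)) {2..n-1}"
    proof (rule inj_onI)
      fix x y assume "x \<in> {2..n-1}" "y \<in> {2..n-1}" "\<sigma> (x-1) = \<sigma> (y-1)"
      then have "x - 1 = y - 1" "2 \<le> x" "2 \<le> y" using injD[OF injs] by auto
      then show "x = y" by simp
    qed
    then have c1: "card X1 \<le> 3" unfolding X1_def by (rule card3)
    have c2: "card X2 \<le> 3" unfolding X2_def by (rule card3) (use injs in \<open>auto intro: inj_on_subset\<close>)
    have sub: "{2..n-1} - (X1 \<union> X2) \<subseteq> G \<sigma>"
    proof
      fix j assume "j \<in> {2..n-1} - (X1 \<union> X2)"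
      then have "2 \<le> j" "j \<le> n - 1" "\<bar>int (\<sigma> (j-1)) - int (\<sigma> n)\<bar> > 1" "\<bar>int (\<sigma> j) - int (\<sigma> n)\<bar> > 1"
        unfolding X1_def X2_def by auto
      from king_insert[OF sK this] this(1,2) show "j \<in> G \<sigma>" unfolding G_def K_def by simp
    qed
    have "n - 8 \<le> card {2..n-1} - card (X1 \<union> X2)"
      using card_Un_le[of X1 X2] c1 c2 n by simp
    also have "\<dots> \<le> card ({2..n-1} - (X1 \<union> X2))"
      by (rule diff_card_le_card_Diff) (simp add: X1_def X2_def)
    also have "\<dots> \<le> card (G \<sigma>)"
      by (rule card_mono[OF _ sub]) (simp add: G_def)
    finally show ?thesis .
  qed
  have "card B * (n - 8) \<le> (\<Sum>\<sigma>\<in>B. card (G \<sigma>))"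
    using sum_bounded_below[of B "n - 8" "\<lambda>\<sigma>. card (G \<sigma>)"] Gb by (simp add: mult.commute)
  also have "\<dots> = card D"
    unfolding D_def by (rule card_SigmaI[symmetric]) (use finB in \<open>auto simp: G_def\<close>)
  also have "card D \<le> card (Sigma K F)"
  proof (rule card_inj_on_le)
    show "inj_on (\<lambda>(\<sigma>, j). (\<sigma> \<circ> cyc n j, j)) D"
    proof (rule inj_onI)
      fix p q assume pD: "p \<in> D" and qD: "q \<in> D"
        and e0: "(\<lambda>(\<sigma>, j). (\<sigma> \<circ> cyc n j, j)) p = (\<lambda>(\<sigma>, j). (\<sigma> \<circ> cyc n j, j)) q"
      obtain \<sigma> j \<sigma>' j' where pq: "p = (\<sigma>, j)" "q = (\<sigma>', j')" by (cases p, cases q) auto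
      have jj: "j' = j" and e: "\<sigma> \<circ> cyc n j = \<sigma>' \<circ> cyc n j" using e0 pq by auto
      have jn: "j \<le> n" using pD pq unfolding D_def G_def by auto
      show "p = q" unfolding pq jj
      proof (simp, rule ext)
        fix x
        have "\<sigma> x = (\<sigma> \<circ> cyc n j) (cycinv n j x)" using cyc_inv1[OF jn] by simp
        also have "\<dots> = \<sigma>' x" using e cyc_inv1[OF jn] by (metis comp_apply)
        finally show "\<sigma> x = \<sigma>' x" .
      qed
    qed
    show "(\<lambda>(\<sigma>, j). (\<sigma> \<circ> cyc n j, j)) ` D \<subseteq> Sigma K F"
    proof
      fix y assume "y \<in> (\<lambda>(\<sigma>, j). (\<sigma> \<circ> cyc n j, j)) ` D"
      then obtain \<sigma> j where sj: "(\<sigma>, j) \<in> D" and y: "y = (\<sigma> \<circ> cyc n j, j)" by auto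
      from sj have s: "\<sigma> \<in> B" and j: "2 \<le> j" "j \<le> n - 1" and t: "\<sigma> \<circ> cyc n j \<in> K"
        unfolding D_def G_def by auto
      have "cyc n j 1 = 1" "cyc n j j = n" using j by (auto simp: cyc_def)
      then show "y \<in> Sigma K F" unfolding y
        using s j t unfolding B_def F_def by (auto simp: abs_minus_commute)
    qed
    show "finite (Sigma K F)" using finK by (auto simp: F_def)
  qed
  also have "\<dots> = (\<Sum>\<tau>\<in>K. card (F \<tau>))"
    by (rule card_SigmaI) (use finK in \<open>auto simp: F_def\<close>)
  also have "\<dots> \<le> card K * 3"
  proof (rule sum_bounded_above[of K "\<lambda>\<tau>. card (F \<tau>)" 3, simplified])
    fix \<tau> assume "\<tau> \<in> K"
    then have "inj \<tau>" unfolding K_def king_perms_def by (auto intro: permutes_inj)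
    then show "card (F \<tau>) \<le> 3" unfolding F_def by (intro card3) (auto intro: inj_on_subset)
  qed
  finally show ?thesis unfolding B_def K_def .
qed

lemma king_nonempty:
  assumes n: "4 \<le> n"
  shows "king_perms n \<noteq> {}"
proof -
  define m where "m = n div 2"
  have m1: "2 * m \<le> n" "n \<le> 2 * m + 1" "2 \<le> m" using n unfolding m_def by auto
  define w where "w = (\<lambda>i. if i \<in> {1..n} then (if i \<le> m then 2*i else 2*(i-m)-1) else i)"
  have inj: "inj_on w {1..n}"
  proof (rule inj_onI)
    fix x y assume x: "x \<in> {1..n}" and y: "y \<in> {1..n}" and e: "w x = w y"
    show "x = y"
    proof (cases "x \<le> m"; cases "y \<le> m")
      assume "x \<le> m" "y \<le> m" then show ?thesis using e x y by (simp add: w_def)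
    next
      assume "x \<le> m" "\<not> y \<le> m" then show ?thesis using e x y unfolding w_def by simp presburger
    next
      assume "\<not> x \<le> m" "y \<le> m" then show ?thesis using e x y unfolding w_def by simp presburger
    next
      assume "\<not> x \<le> m" "\<not> y \<le> m" then show ?thesis using e x y unfolding w_def by simp
    qed
  qed
  have img: "w ` {1..n} \<subseteq> {1..n}" using m1 unfolding w_def by auto
  have "w ` {1..n} = {1..n}" by (rule endo_inj_surj[OF _ img inj]) simp
  with inj have "bij_betw w {1..n} {1..n}" by (simp add: bij_betw_def)
  then have p: "w permutes {1..n}" by (rule bij_imp_permutes) (simp add: w_def)
  have "\<bar>int (w i) - int (w (i + 1))\<bar> > 1" if i: "1 \<le> i" "i \<le> n - 1" for i
  proof -
    consider "i + 1 \<le> m" | "i = m" | "m < i" by linarith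
    then show ?thesis
    proof cases
      case 1 then show ?thesis using i m1 by (simp add: w_def)
    next
      case 2 then show ?thesis using i m1 by (simp add: w_def)
    next
      case 3
      have "i + 1 \<le> n" using i by linarith
      then show ?thesis using 3 i m1 by (simp add: w_def)
    qed
  qed
  with p have "w \<in> king_perms n" by (simp add: king_perms_def)
  then show ?thesis by auto
qed


theorem theorem3p2:
  shows "(\<lambda>n. real (card (cyl_king_perms n)) / real (card (king_perms n))) \<longlonglongrightarrow> 1"
proof -
  define b where "b = (\<lambda>n. card {\<sigma>\<in>king_perms n. \<bar>int (\<sigma> 1) - int (\<sigma> n)\<bar> \<le> 1})"
  define k where "k = (\<lambda>n. card (king_perms n))"
  define r where "r = (\<lambda>n. real (b n) / real (k n))"
  have key: "0 \<le> r n \<and> r n \<le> 3 / (real n - 8) \<and>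
      real (card (cyl_king_perms n)) / real (card (king_perms n)) = 1 - r n" if n: "9 \<le> n" for n
  proof -
    have kp: "k n > 0" unfolding k_def using king_nonempty[of n] n king_finite[of n]
      by (simp add: card_gt_0_iff)
    have cb: "b n * (n - 8) \<le> k n * 3" unfolding b_def k_def by (rule count_bound) (use n in simp)
    then have "real (b n * (n - 8)) \<le> real (k n * 3)" by (simp only: of_nat_le_iff)
    moreover have "real (n - 8) = real n - 8" using n by (simp add: of_nat_diff)
    ultimately have "real (b n) * (real n - 8) \<le> real (k n) * 3" by (simp only: of_nat_mult)
    then have r1: "r n \<le> 3 / (real n - 8)" unfolding r_def using kp n
      by (simp add: field_simps)
    have "cyl_king_perms n = king_perms n - {\<sigma>\<in>king_perms n. \<bar>int (\<sigma> 1) - int (\<sigma> n)\<bar> \<le> 1}"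
      unfolding cyl_king_perms_def by auto
    then have "card (cyl_king_perms n) = k n - b n"
      unfolding k_def b_def by (simp add: card_Diff_subset king_finite)
    moreover have "card (king_perms n) = k n" by (simp add: k_def)
    moreover have "b n \<le> k n" unfolding b_def k_def by (rule card_mono[OF king_finite]) auto
    ultimately have "real (card (cyl_king_perms n)) / real (card (king_perms n)) = 1 - r n"
    proof -
      assume a: "card (cyl_king_perms n) = k n - b n" "card (king_perms n) = k n" "b n \<le> k n"
      have "real (card (cyl_king_perms n)) = real (k n) - real (b n)" using a by (simp add: of_nat_diff)
      then show ?thesis unfolding r_def a(2) using kp by (simp add: diff_divide_distrib)
    qed
    moreover have "0 \<le> r n" unfolding r_def by simp
    ultimately show ?thesis using r1 by simp
  qed
  have lim3: "(\<lambda>n. 3 / (real n - 8)) \<longlonglongrightarrow> 0" by real_asymp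
  have "r \<longlonglongrightarrow> 0"
  proof (rule tendsto_sandwich[OF _ _ tendsto_const lim3])
    show "\<forall>\<^sub>F n in sequentially. 0 \<le> r n" unfolding eventually_sequentially using key by (intro exI[of _ 9] allI impI) blast
    show "\<forall>\<^sub>F n in sequentially. r n \<le> 3 / (real n - 8)" unfolding eventually_sequentially using key by (intro exI[of _ 9] allI impI) blast
  qed
  then have "(\<lambda>n. 1 - r n) \<longlonglongrightarrow> 1 - 0" by (intro tendsto_intros)
  then have "(\<lambda>n. 1 - r n) \<longlonglongrightarrow> 1" by simp
  moreover have "\<forall>\<^sub>F n in sequentially. 1 - r n = real (card (cyl_king_perms n)) / real (card (king_perms n))"
    unfolding eventually_sequentially using key by (intro exI[of _ 9] allI impI) simp
  ultimately show ?thesis by (rule Lim_transform_eventually)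
qed

end
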